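(* For every $N\ge 1$, the only right Markov code for the one-sided full $N$-shift $(X_{[N]},\sigma_{[N]})$ over $\Sigma_{[N]}=\{1,\dots,N\}$ is the trivial right Markov code $\Sigma_{[N]}$ (the set of all words of length $1$).
   Context: For an $N\times N$ matrix $A$ with entries in $\{0,1\}$, $\Sigma_A=\{1,\dots,N\}$, $X_A$ is the set of sequences $(x_n)_{n\in\mathbb{N}}$ in $\Sigma_A$ with $A(x_n,x_{n+1})=1$ for all $n$, with shift $\sigma_A$; the full $N$-shift is the case where all entries of $A$ equal $1$. $B_k(X_A)$ is the set of admissible words of length $k$, $B_*(X_A)$ the union over $k\ge0$ (including the empty word). For a word $w=w_1\cdots w_\ell$, $\sigma_A(w)=w_2\cdots w_\ell$. A code is a nonempty $\mathcal{C}\subset B_*(X_A)$ such that any equality of concatenations $\omega(i_1)\cdots\omega(i_k)=\omega(j_1)\cdots\omega(j_n)$ of words of $\mathcal{C}$ forces $n=k$ and $\omega(i_m)=\omega(j_m)$ for all $m$; a prefix code is a code in which no word is a prefix of another. A finite prefix code $\mathcal{C}=\{\omega(1),\dots,\omega(M)\}\subset B_*(X_A)$, $\Sigma_{A(\mathcal{C})}=\{1,\dots,M\}$, is a right Markov code for $(X_A,\sigma_A)$ if: (i) for every $\gamma\in B_*(X_A)$ there is $\eta\in B_*(X_A)$ with $\gamma\eta\in B_*(X_A)$ and a unique finite sequence $(i_1,\dots,i_k)$ in $\Sigma_{A(\mathcal{C})}$ with $\gamma\eta=\omega(i_1)\cdots\omega(i_k)$; (ii) there is $L\in\mathbb{N}$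 such that for all $i_1,\dots,i_L$ with $\omega(i_1)\cdots\omega(i_L)\in B_*(X_A)$ there exist $j_1,\dots,j_k\in\Sigma_{A(\mathcal{C})}$ with $\sigma_A(\omega(i_1))\omega(i_2)\cdots\omega(i_L)=\omega(j_1)\cdots\omega(j_k)$; (iii) for every $i,j$ there are $n_1,\dots,n_l$ with $\omega(i)\omega(n_1)\cdots\omega(n_l)\omega(j)\in B_*(X_A)$. *)

theory Defs
  imports Main
begin

text \<open>Alphabet \<Sigma>_A = {1..N}; a 0-1 matrix A is a function nat => nat => nat
  (only its values on {1..N} x {1..N} matter). Words are lists; one-sided
  sequences are functions nat => nat.\<close>

definition XA :: "nat \<Rightarrow> (nat \<Rightarrow> nat \<Rightarrow> nat) \<Rightarrow> (nat \<Rightarrow> nat) set" where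
  "XA N A = {x. (\<forall>n. x n \<in> {1..N}) \<and> (\<forall>n. A (x n) (x (Suc n)) = 1)}"

definition Bstar :: "nat \<Rightarrow> (nat \<Rightarrow> nat \<Rightarrow> nat) \<Rightarrow> nat list set" where
  "Bstar N A = {w. \<exists>x\<in>XA N A. \<exists>n. w = map x [n..<n + length w]}"

definition full_matrix :: "nat \<Rightarrow> nat \<Rightarrow> nat" where
  "full_matrix i j = 1"

definition is_code :: "nat \<Rightarrow> (nat \<Rightarrow> nat \<Rightarrow> nat) \<Rightarrow> nat list set \<Rightarrow> bool" where
  "is_code N A C \<longleftrightarrow> C \<noteq> {} \<and> C \<subseteq> Bstar N A \<and>
     (\<forall>us vs. us \<in> lists C \<longrightarrow> vs \<in> lists C \<longrightarrow> concat us = concat vs \<longrightarrow> us = vs)"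

definition is_prefix_code :: "nat \<Rightarrow> (nat \<Rightarrow> nat \<Rightarrow> nat) \<Rightarrow> nat list set \<Rightarrow> bool" where
  "is_prefix_code N A C \<longleftrightarrow> is_code N A C \<and>
     (\<forall>u\<in>C. \<forall>v\<in>C. u \<noteq> v \<longrightarrow> \<not> (\<exists>z. v = u @ z))"

definition right_markov_code :: "nat \<Rightarrow> (nat \<Rightarrow> nat \<Rightarrow> nat) \<Rightarrow> nat list set \<Rightarrow> bool" where
  "right_markov_code N A C \<longleftrightarrow>
     finite C \<and> is_prefix_code N A C \<and>
     \<comment> \<open>(i)\<close>
     (\<forall>\<gamma>\<in>Bstar N A. \<exists>\<eta>\<in>Bstar N A. \<gamma> @ \<eta> \<in> Bstar N A \<and>
         (\<exists>!ws. ws \<in> lists C \<and> \<gamma> @ \<eta> = concat ws)) \<and>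
     \<comment> \<open>(ii)\<close>
     (\<exists>L::nat. L \<ge> 1 \<and> (\<forall>ws. ws \<in> lists C \<longrightarrow> length ws = L \<longrightarrow> concat ws \<in> Bstar N A \<longrightarrow>
         (\<exists>vs\<in>lists C. tl (hd ws) @ concat (tl ws) = concat vs))) \<and>
     \<comment> \<open>(iii)\<close>
     (\<forall>u\<in>C. \<forall>v\<in>C. \<exists>ns\<in>lists C. u @ concat ns @ v \<in> Bstar N A)"

end

theory Submission
  imports Defs
begin

lemma Bstar_full:
  assumes "N \<ge> 1"
  shows "Bstar N full_matrix = {w. set w \<subseteq> {1..N}}"
proof (intro set_eqI iffI)
  fix w assume "w \<in> Bstar N full_matrix"
  then obtain x n where x: "x \<in> XA N full_matrix" and w: "w = map x [n..<n + length w]"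
    unfolding Bstar_def by blast
  from x have "\<forall>k. x k \<in> {1..N}" unfolding XA_def by blast
  then show "w \<in> {w. set w \<subseteq> {1..N}}" by (subst w) auto
next
  fix w assume h: "w \<in> {w. set w \<subseteq> {1..N}}"
  define x where "x = (\<lambda>k. if k < length w then w ! k else 1)"
  have "x \<in> XA N full_matrix" using h assms
    unfolding XA_def full_matrix_def x_def by (auto simp: subset_iff)
  moreover have "w = map x [0..<0 + length w]"
    by (rule nth_equalityI) (auto simp: x_def)
  ultimately show "w \<in> Bstar N full_matrix" unfolding Bstar_def by blast
qed

lemma singles_map:
  "\<forall>u\<in>set us. length u = 1 \<Longrightarrow> us = map (\<lambda>a. [a]) (concat us)"
proof (induction us)
  case Nil then show ?case by simp
next
  case (Cons u us)
  then obtain a where "u = [a]" by (cases u) auto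
  with Cons show ?case by simp
qed

lemma concat_rep: "concat (replicate k (replicate j b)) = replicate (j * k) b"
  by (induction k) (auto simp: replicate_add[symmetric] add.commute)

lemma len_concat: "\<forall>v\<in>set vs. length v = j \<Longrightarrow> length (concat vs) = j * length vs"
  by (induction vs) auto

lemma all_b:
  "set v \<subseteq> {b} \<Longrightarrow> v = replicate (length v) b"
  by (induction v) auto

theorem mainTheorem3:
  fixes N :: nat and C :: "nat list set"
  assumes "N \<ge> 1"
  shows "right_markov_code N full_matrix C \<longleftrightarrow> C = {[a] | a. a \<in> {1..N}}"
proof
  note B = Bstar_full[OF assms]
  assume R: "right_markov_code N full_matrix C"
  have fin: "finite C" and code: "is_code N full_matrix C" and pre: "is_prefix_code N full_matrix C"
    using R unfolding right_markov_code_def is_prefix_code_def by auto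
  have Cne: "C \<noteq> {}" and CB: "C \<subseteq> Bstar N full_matrix"
    and inj: "\<And>us vs. us \<in> lists C \<Longrightarrow> vs \<in> lists C \<Longrightarrow> concat us = concat vs \<Longrightarrow> us = vs"
    using code unfolding is_code_def by auto
  have prefx: "\<And>u v z. u \<in> C \<Longrightarrow> v \<in> C \<Longrightarrow> v = u @ z \<Longrightarrow> u = v"
    using pre unfolding is_prefix_code_def by blast
  have nonempty: "[] \<notin> C"
  proof
    assume "[] \<in> C"
    then have "[[]] = ([] :: nat list list)" using inj[of "[[]]" "[]"] by auto
    then show False by simp
  qed
  have cmp: "\<And>b i j. replicate i b \<in> C \<Longrightarrow> replicate j b \<in> C \<Longrightarrow> i = j"
  proof -
    fix b i j assume hi: "replicate i b \<in> C" and hj: "replicate j b \<in> C"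
    show "i = j"
    proof (cases "i \<le> j")
      case True
      then have "replicate j b = replicate i b @ replicate (j - i) b"
        by (simp add: replicate_add[symmetric])
      then have "replicate i b = replicate j b" using prefx[OF hi hj] by blast
      then show ?thesis by simp
    next
      case False
      then have "replicate i b = replicate j b @ replicate (i - j) b"
        by (simp add: replicate_add[symmetric])
      then have "replicate j b = replicate i b" using prefx[OF hj hi] by blast
      then show ?thesis by simp
    qed
  qed
  define m where "m = Max (length ` C)"
  have mbound: "\<And>u. u \<in> C \<Longrightarrow> length u \<le> m" using fin unfolding m_def by auto
  obtain u0 where u0: "u0 \<in> C" using Cne by blast
  have m1: "m \<ge> 1" using mbound[OF u0] nonempty u0 by (cases u0) auto
  obtain L where L1: "L \<ge> 1" and LL: "\<And>ws. ws \<in> lists C \<Longrightarrow> length ws = L \<Longrightarrow>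
      concat ws \<in> Bstar N full_matrix \<Longrightarrow> \<exists>vs\<in>lists C. tl (hd ws) @ concat (tl ws) = concat vs"
    using R unfolding right_markov_code_def by blast
  have single: "[b] \<in> C" if b: "b \<in> {1..N}" for b
  proof -
    have "replicate m b \<in> Bstar N full_matrix" using B b by auto
    then obtain \<eta> ws where ws: "ws \<in> lists C" "replicate m b @ \<eta> = concat ws"
      using R unfolding right_markov_code_def by blast
    have "ws \<noteq> []" using ws m1 by (cases m) auto
    then obtain u ws' where wsu: "ws = u # ws'" by (cases ws) auto
    have uC: "u \<in> C" using ws wsu by auto
    have lu: "length u \<le> m" using mbound[OF uC] .
    have "take (length u) (replicate m b @ \<eta>) = u" using ws(2) wsu by simp
    then have ueq: "u = replicate (length u) b" using lu by simp
    define j where "j = length u"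
    have j1: "j \<ge> 1" using uC nonempty unfolding j_def by (cases u) auto
    have bj: "replicate j b \<in> C" using uC ueq unfolding j_def by simp
    define ws2 where "ws2 = replicate L (replicate j b)"
    have "ws2 \<in> lists C" using bj unfolding ws2_def by auto
    moreover have "length ws2 = L" unfolding ws2_def by simp
    moreover have "concat ws2 \<in> Bstar N full_matrix" using B b unfolding ws2_def by auto
    ultimately obtain vs where vs: "vs \<in> lists C" "tl (hd ws2) @ concat (tl ws2) = concat vs"
      using LL by blast
    obtain L' where L': "L = Suc L'" using L1 by (cases L) auto
    have cv: "concat vs = replicate (j - 1 + j * L') b"
      using vs(2) unfolding ws2_def L' by (simp add: replicate_add concat_rep)
    have allj: "v = replicate j b" if v: "v \<in> set vs" for v
    proof -
      have "set v \<subseteq> set (concat vs)" using v by auto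
      then have "set v \<subseteq> {b}" using cv by auto
      then have "v = replicate (length v) b" by (rule all_b)
      moreover have "v \<in> C" using v vs(1) by auto
      ultimately show ?thesis using cmp bj by metis
    qed
    then have "\<forall>v\<in>set vs. length v = j" by (metis length_replicate)
    then have "length (concat vs) = j * length vs" by (rule len_concat)
    then have "j * length vs = j - 1 + j * L'" using cv by simp
    then have jeq: "j * length vs = j - 1 + j * L'" .
    have "j = 1"
    proof (cases "length vs \<le> L'")
      case True
      then have "j * length vs \<le> j * L'" by simp
      then show ?thesis using jeq j1 by linarith
    next
      case False
      then have "Suc L' \<le> length vs" by simp
      then have "j * Suc L' \<le> j * length vs" by (rule mult_le_mono2)
      then show ?thesis using jeq j1 by simp
    qed
    then show ?thesis using bj by simp
  qed
  show "C = {[a] | a. a \<in> {1..N}}"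
  proof (intro set_eqI iffI)
    fix w assume w: "w \<in> C"
    then have sw: "set w \<subseteq> {1..N}" using CB B by auto
    obtain a t where wa: "w = a # t" using w nonempty by (cases w) auto
    then have a: "a \<in> {1..N}" using sw by auto
    have "[a] = w" using prefx[OF single[OF a] w, of t] wa by simp
    then show "w \<in> {[a] | a. a \<in> {1..N}}" using a by blast
  next
    fix w assume "w \<in> {[a] | a. a \<in> {1..N}}"
    then show "w \<in> C" using single by blast
  qed
next
  assume C: "C = {[a] | a. a \<in> {1..N}}"
  note B = Bstar_full[OF assms]
  have len1: "\<And>u. u \<in> C \<Longrightarrow> length u = 1" using C by auto
  have injC: "\<And>us vs. us \<in> lists C \<Longrightarrow> vs \<in> lists C \<Longrightarrow> concat us = concat vs \<Longrightarrow> us = vs"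
  proof -
    fix us vs assume "us \<in> lists C" "vs \<in> lists C" "concat us = concat vs"
    moreover have "\<forall>u\<in>set us. length u = 1" "\<forall>u\<in>set vs. length u = 1"
      using \<open>us \<in> lists C\<close> \<open>vs \<in> lists C\<close> len1 by auto
    ultimately show "us = vs" using singles_map[of us] singles_map[of vs] by simp
  qed
  have fin: "finite C"
  proof -
    have "C = (\<lambda>a. [a]) ` {1..N}" using C by auto
    then show ?thesis by simp
  qed
  have code: "is_code N full_matrix C"
    unfolding is_code_def
  proof (intro conjI allI impI)
    show "C \<noteq> {}" using assms C by auto
    show "C \<subseteq> Bstar N full_matrix" using C B by auto
  qed (rule injC; assumption)
  have pre: "is_prefix_code N full_matrix C"
    unfolding is_prefix_code_def using code C by auto
  have i: "\<forall>\<gamma>\<in>Bstar N full_matrix. \<exists>\<eta>\<in>Bstar N full_matrix. \<gamma> @ \<eta> \<in> Bstar N full_matrix \<and>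
         (\<exists>!ws. ws \<in> lists C \<and> \<gamma> @ \<eta> = concat ws)"
  proof
    fix g assume g: "g \<in> Bstar N full_matrix"
    have e: "[] \<in> Bstar N full_matrix" using B by simp
    have m: "map (\<lambda>a. [a]) g \<in> lists C" using g B C by (auto simp: subset_iff)
    have c: "g = concat (map (\<lambda>a. [a]) g)" by (induction g) auto
    show "\<exists>\<eta>\<in>Bstar N full_matrix. g @ \<eta> \<in> Bstar N full_matrix \<and>
         (\<exists>!ws. ws \<in> lists C \<and> g @ \<eta> = concat ws)"
    proof (rule bexI[OF _ e], intro conjI)
      show "g @ [] \<in> Bstar N full_matrix" using g by simp
      show "\<exists>!ws. ws \<in> lists C \<and> g @ [] = concat ws"
      proof (rule ex1I[of _ "map (\<lambda>a. [a]) g"])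
        show "map (\<lambda>a. [a]) g \<in> lists C \<and> g @ [] = concat (map (\<lambda>a. [a]) g)"
          using m c by simp
      next
        fix ws assume "ws \<in> lists C \<and> g @ [] = concat ws"
        then show "ws = map (\<lambda>a. [a]) g" using injC[OF _ m, of ws] c by simp
      qed
    qed
  qed
  have ii: "\<exists>L::nat. L \<ge> 1 \<and> (\<forall>ws. ws \<in> lists C \<longrightarrow> length ws = L \<longrightarrow> concat ws \<in> Bstar N full_matrix \<longrightarrow>
         (\<exists>vs\<in>lists C. tl (hd ws) @ concat (tl ws) = concat vs))"
  proof (intro exI[of _ 1] conjI allI impI)
    fix ws :: "nat list list" assume "ws \<in> lists C" "length ws = 1"
    then obtain u where "ws = [u]" "u \<in> C" by (cases ws) auto
    then have "tl (hd ws) @ concat (tl ws) = concat []" using len1[of u] by (cases u) auto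
    then show "\<exists>vs\<in>lists C. tl (hd ws) @ concat (tl ws) = concat vs" by blast
  qed simp
  have iii: "\<forall>u\<in>C. \<forall>v\<in>C. \<exists>ns\<in>lists C. u @ concat ns @ v \<in> Bstar N full_matrix"
  proof (intro ballI)
    fix u v assume "u \<in> C" "v \<in> C"
    then have "u @ concat [] @ v \<in> Bstar N full_matrix" using C B by auto
    then show "\<exists>ns\<in>lists C. u @ concat ns @ v \<in> Bstar N full_matrix" by blast
  qed
  show "right_markov_code N full_matrix C"
    unfolding right_markov_code_def using fin pre i ii iii by blast
qed

end
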